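(* Let $p\in[1,\infty]$, $a,b\in\mathbb{R}$, $b\neq0$, and $|a|\neq|b|^{1/p}$ (with $|b|^{1/p}=1$ when $p=\infty$). For any $g\in L^p(\mathbb{R})$ there is a unique (up to equality almost everywhere) solution $f\in L^p(\mathbb{R})$ of $$f(x)-af(bx)=g(x),$$ and it is given by the following series, which are absolutely and uniformly convergent in $L^p(\mathbb{R})$: $$f(x)=\begin{cases}\sum_{n=0}^\infty a^n g(b^nx) & \text{if } |a|<|b|^{1/p},\\ -\sum_{n=1}^\infty \left(\frac1a\right)^n g\!\left(\frac{x}{b^n}\right) & \text{if } |a|>|b|^{1/p}.\end{cases}$$
   Context: $L^p(\mathbb{R})$ denotes the usual Lebesgue space of real-valued functions on $\mathbb{R}$; for $p=\infty$ the convention $|b|^{1/p}=1$ is used. *)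

theory Defs
  imports "HOL-Analysis.Analysis" "HOL-Probability.Essential_Supremum"
begin

definition memLp :: "ennreal \<Rightarrow> (real \<Rightarrow> real) \<Rightarrow> bool" where
  "memLp p f \<longleftrightarrow> f \<in> borel_measurable lborel \<and>
     (if p = top then esssup lborel (\<lambda>x. ereal \<bar>f x\<bar>) < \<infinity>
      else integrable lborel (\<lambda>x. \<bar>f x\<bar> powr enn2real p))"

definition Lpnorm :: "ennreal \<Rightarrow> (real \<Rightarrow> real) \<Rightarrow> real" where
  "Lpnorm p f =
     (if p = top then real_of_ereal (esssup lborel (\<lambda>x. ereal \<bar>f x\<bar>))
      else (\<integral>x. \<bar>f x\<bar> powr enn2real p \<partial>lborel) powr (1 / enn2real p))"

definition root_p :: "ennreal \<Rightarrow> real \<Rightarrow> real" where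
  "root_p p b = (if p = top then 1 else \<bar>b\<bar> powr (1 / enn2real p))"

definition Lp_series_conv :: "ennreal \<Rightarrow> (nat \<Rightarrow> real \<Rightarrow> real) \<Rightarrow> (real \<Rightarrow> real) \<Rightarrow> bool" where
  "Lp_series_conv p s f \<longleftrightarrow>
     (\<forall>n. memLp p (s n)) \<and>
     summable (\<lambda>n. Lpnorm p (s n)) \<and>
     (\<lambda>N. Lpnorm p (\<lambda>x. f x - (\<Sum>n<N. s n x))) \<longlonglongrightarrow> 0"

end

theory Submission
  imports Defs
begin

lemma AE_scale:
  fixes c :: real assumes "c \<noteq> 0" "AE x in lborel. P x" shows "AE x in lborel. P (c*x)"
proof -
  from assms(2) obtain N where N: "N \<in> null_sets lborel" "{x \<in> space lborel. \<not> P x} \<subseteq> N"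
    by (auto simp: eventually_ae_filter)
  have Nb[measurable]: "N \<in> sets borel" using N(1) by (simp add: null_sets_def)
  have "AE x in lborel. x \<notin> N" using N(1) by (rule AE_not_in)
  then have "AE x in lborel. 0 + c*x \<notin> N" using assms(1) by (intro AE_borel_affine) auto
  then show ?thesis by eventually_elim (use N(2) in auto)
qed

lemma integral_scale:
  fixes f :: "real \<Rightarrow> real" and c :: real assumes "c \<noteq> 0"
  shows "(\<integral>x. f (c*x) \<partial>lborel) = (\<integral>x. f x \<partial>lborel) / \<bar>c\<bar>"
  using lborel_integral_real_affine[OF assms, of f 0] assms by simp

lemma integrable_scale:
  fixes f :: "real \<Rightarrow> real" and c :: real assumes "c \<noteq> 0" "integrable lborel f"
  shows "integrable lborel (\<lambda>x. f (c*x))"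
  using lborel_integrable_real_affine[OF assms(2), of c 0] assms by simp

lemma powr_le_self01: fixes t q :: real assumes "0 \<le> t" "t \<le> 1" "1 \<le> q" shows "t powr q \<le> t"
  using assms powr_le_one_le[of t q] by (cases "t = 0") auto

lemma powr_convex0: fixes q :: real assumes "1 \<le> q" shows "convex_on {0..} (\<lambda>x. x powr q)"
proof (rule convex_onI)
  fix t x y :: real assume t: "0 < t" "t < 1" and xy: "x \<in> {0..}" "y \<in> {0..}"
  show "((1 - t) *\<^sub>R x + t *\<^sub>R y) powr q \<le> (1 - t) * x powr q + t * y powr q"
  proof (cases "x = 0 \<or> y = 0")
    case False
    then have "x \<in> {0<..}" "y \<in> {0<..}" using xy by auto
    then show ?thesis using powr_convex[OF assms] t
      unfolding convex_on_def by (smt (verit))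
  next
    case True
    then show ?thesis
    proof
      assume "x = 0"
      then have "((1 - t) *\<^sub>R x + t *\<^sub>R y) powr q = t powr q * y powr q" by (simp add: powr_mult)
      also have "\<dots> \<le> t * y powr q" using powr_le_self01[of t q] t assms by (intro mult_right_mono) auto
      finally show ?thesis using \<open>x = 0\<close> by simp
    next
      assume "y = 0"
      then have "((1 - t) *\<^sub>R x + t *\<^sub>R y) powr q = (1-t) powr q * x powr q" by (simp add: powr_mult)
      also have "\<dots> \<le> (1-t) * x powr q" using powr_le_self01[of "1-t" q] t assms by (intro mult_right_mono) auto
      finally show ?thesis using \<open>y = 0\<close> by simp
    qed
  qed
qed (simp add: convex_real_interval)

lemma jensen_geo:
  fixes q r :: real and v :: "nat \<Rightarrow> real"
  assumes q: "1 \<le> q" and r: "0 \<le> r" "r < 1" and v: "\<And>m. 0 \<le> v m"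
  shows "(\<Sum>m<N. r^m * v m) powr q \<le> (2/(1-r)) powr (q-1) * (\<Sum>m<N. r^m * v m powr q)"
proof (cases "N = 0")
  case True then show ?thesis by simp
next
  case False
  define \<rho> where "\<rho> = (1+r)/2"
  have \<rho>: "0 < \<rho>" "\<rho> < 1" "r \<le> \<rho>" using r by (auto simp: \<rho>_def)
  define W where "W = (\<Sum>m<N. \<rho>^m)"
  have W1: "1 \<le> W"
  proof -
    have "(\<Sum>m\<in>{0}. \<rho>^m) \<le> W" unfolding W_def using False \<rho>
      by (intro sum_mono2) auto
    then show ?thesis by simp
  qed
  have W2: "W \<le> 2/(1-r)"
  proof -
    have "W = (1 - \<rho>^N)/(1-\<rho>)" unfolding W_def using \<rho> by (simp add: sum_gp_strict)
    also have "\<dots> \<le> 1/(1-\<rho>)" using \<rho> by (intro divide_right_mono) auto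
    also have "\<dots> = 2/(1-r)" by (simp add: \<rho>_def field_simps)
    finally show ?thesis .
  qed
  define S where "S = (\<Sum>m<N. r^m * v m)"
  define T where "T = (\<Sum>m<N. r^m * v m powr q)"
  have S0: "0 \<le> S" unfolding S_def using r v by (intro sum_nonneg) auto
  have T0: "0 \<le> T" unfolding T_def using r v by (intro sum_nonneg) auto
  have c1: "(\<Sum>m<N. (\<rho>^m/W) *\<^sub>R ((r/\<rho>)^m * v m)) powr q \<le> (\<Sum>m<N. (\<rho>^m/W) * ((r/\<rho>)^m * v m) powr q)"
  proof (rule convex_on_sum[OF _ _ powr_convex0[OF q]])
    show "finite {..<N}" by simp
    show "{..<N} \<noteq> {}" using False by auto
    show "(\<Sum>m<N. \<rho>^m/W) = 1" using W1 by (simp add: W_def[symmetric] sum_divide_distrib[symmetric])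
    show "0 \<le> \<rho>^i/W" for i using W1 \<rho> by simp
    show "(r/\<rho>)^i * v i \<in> {0..}" for i using \<rho> r v by simp
  qed
  have c2: "(\<Sum>m<N. (\<rho>^m/W) *\<^sub>R ((r/\<rho>)^m * v m)) = S / W"
    unfolding S_def sum_divide_distrib using \<rho>
    by (intro sum.cong) (auto simp: power_divide)
  have c3: "(\<Sum>m<N. (\<rho>^m/W) * ((r/\<rho>)^m * v m) powr q) \<le> T / W"
    unfolding T_def sum_divide_distrib
  proof (intro sum_mono)
    fix m assume "m \<in> {..<N}"
    have t: "0 \<le> (r/\<rho>)^m" "(r/\<rho>)^m \<le> 1" using \<rho> r by (auto intro: power_le_one)
    have "((r/\<rho>)^m * v m) powr q = ((r/\<rho>)^m) powr q * v m powr q" by (simp add: powr_mult)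
    also have "\<dots> \<le> (r/\<rho>)^m * v m powr q" using powr_le_self01[OF t q] by (intro mult_right_mono) auto
    finally have "(\<rho>^m/W) * ((r/\<rho>)^m * v m) powr q \<le> (\<rho>^m/W) * ((r/\<rho>)^m * v m powr q)"
      using W1 \<rho> by (intro mult_left_mono) auto
    also have "\<dots> = r^m * v m powr q / W" using \<rho> by (simp add: power_divide)
    finally show "(\<rho>^m/W) * ((r/\<rho>)^m * v m) powr q \<le> r^m * v m powr q / W" .
  qed
  have A: "(S/W) powr q \<le> T/W" using c1 c3 unfolding c2 by linarith
  have "S powr q = W powr q * (S/W) powr q" using W1 by (simp add: powr_mult[symmetric])
  also have "\<dots> \<le> W powr q * (T/W)" using A by (intro mult_left_mono) auto
  also have "\<dots> = W powr (q-1) * T" using W1 by (simp add: powr_diff)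
  also have "\<dots> \<le> (2/(1-r)) powr (q-1) * T" using W1 W2 q T0
    by (intro mult_right_mono powr_mono2) auto
  finally show ?thesis unfolding S_def T_def .
qed

lemma ennreal_enn2real_le': "ennreal (enn2real x) \<le> x"
  by (cases x) auto

lemma series_Lq:
  fixes q r I :: real and v :: "nat \<Rightarrow> real \<Rightarrow> real"
  assumes q: "1 \<le> q" and r: "0 \<le> r" "r < 1"
    and vm[measurable]: "\<And>m. v m \<in> borel_measurable lborel"
    and v0: "\<And>m x. 0 \<le> v m x"
    and vi: "\<And>m. integrable lborel (\<lambda>x. v m x powr q)"
    and vI: "\<And>m. (\<integral>x. v m x powr q \<partial>lborel) \<le> I"
  shows "(AE x in lborel. summable (\<lambda>m. r^m * v m x)) \<and>
    integrable lborel (\<lambda>x. (\<Sum>m. r^m * v m x) powr q) \<and>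
    (\<integral>x. (\<Sum>m. r^m * v m x) powr q \<partial>lborel) \<le> (2/(1-r)) powr (q-1) * (I/(1-r))"
proof -
  define K where "K = (2/(1-r)) powr (q-1)"
  have K0: "0 \<le> K" by (simp add: K_def)
  have "0 \<le> (\<integral>x. v 0 x powr q \<partial>lborel)" by (rule integral_nonneg_AE) auto
  then have I0: "0 \<le> I" using vI[of 0] by linarith
  define V where "V x = (\<Sum>m. ennreal (r^m * v m x powr q))" for x
  have Vm[measurable]: "V \<in> borel_measurable lborel" unfolding V_def by measurable
  have "(\<integral>\<^sup>+x. V x \<partial>lborel) = (\<Sum>m. \<integral>\<^sup>+x. ennreal (r^m * v m x powr q) \<partial>lborel)"
    unfolding V_def by (rule nn_integral_suminf) measurable
  also have "\<dots> \<le> (\<Sum>m. ennreal (r^m * I))"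
  proof (intro suminf_le summableI)
    fix m
    have "(\<integral>\<^sup>+x. ennreal (r^m * v m x powr q) \<partial>lborel) = ennreal (\<integral>x. r^m * v m x powr q \<partial>lborel)"
      using vi[of m] r by (intro nn_integral_eq_integral integrable_mult_right) auto
    also have "\<dots> \<le> ennreal (r^m * I)" using vI[of m] r
      by (intro ennreal_leI) (auto intro: mult_left_mono)
    finally show "(\<integral>\<^sup>+x. ennreal (r^m * v m x powr q) \<partial>lborel) \<le> ennreal (r^m * I)" .
  qed
  also have "\<dots> = ennreal (I/(1-r))"
  proof (rule suminf_ennreal_eq)
    show "0 \<le> r^m * I" for m using r I0 by simp
    have "(\<lambda>m. r^m) sums (1/(1-r))" using r by (intro geometric_sums) simp
    then have "(\<lambda>m. r^m * I) sums (1/(1-r) * I)" by (rule sums_mult2)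
    then show "(\<lambda>m. r^m * I) sums (I/(1-r))" by simp
  qed
  finally have nnV: "(\<integral>\<^sup>+x. V x \<partial>lborel) \<le> ennreal (I/(1-r))" .
  have "(\<integral>\<^sup>+x. V x \<partial>lborel) < top" using nnV ennreal_less_top by (rule le_less_trans)
  then have "(\<integral>\<^sup>+x. V x \<partial>lborel) \<noteq> \<infinity>" by simp
  then have AEV: "AE x in lborel. V x \<noteq> \<infinity>" by (rule nn_integral_PInf_AE[OF Vm])
  have AE1: "AE x in lborel. summable (\<lambda>m. r^m * v m x) \<and>
     (\<Sum>m. r^m * v m x) powr q \<le> K * enn2real (V x)"
    using AEV
  proof eventually_elim
    case (elim x)
    have nn: "\<And>m. 0 \<le> r^m * v m x powr q" using r by auto
    have sT: "summable (\<lambda>m. r^m * v m x powr q)"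
      using elim unfolding V_def by (intro summable_suminf_not_top nn) auto
    define T where "T = (\<Sum>m. r^m * v m x powr q)"
    have VT: "enn2real (V x) = T" unfolding V_def T_def using elim nn
      by (subst suminf_ennreal) (auto simp: V_def suminf_nonneg[OF sT])
    have T0: "0 \<le> T" unfolding T_def using sT nn by (rule suminf_nonneg)
    define B where "B = (K * T) powr (1/q)"
    have SN: "(\<Sum>m<N. r^m * v m x) \<le> B" for N
    proof -
      have S0: "0 \<le> (\<Sum>m<N. r^m * v m x)" using r v0 by (intro sum_nonneg) auto
      have "(\<Sum>m<N. r^m * v m x) powr q \<le> K * (\<Sum>m<N. r^m * v m x powr q)"
        unfolding K_def using q r v0 by (intro jensen_geo) auto
      also have "\<dots> \<le> K * T" unfolding T_def using K0 sT nn
        by (intro mult_left_mono sum_le_suminf) auto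
      finally have "((\<Sum>m<N. r^m * v m x) powr q) powr (1/q) \<le> B"
        unfolding B_def using q by (intro powr_mono2) auto
      then show ?thesis using q S0 by (simp add: powr_powr powr_one)
    qed
    have sS: "summable (\<lambda>m. r^m * v m x)"
    proof (rule bounded_imp_summable)
      show "\<And>n. 0 \<le> r^n * v n x" using r v0 by auto
      show "(\<Sum>k\<le>n. r^k * v k x) \<le> B" for n using SN[of "Suc n"] by (simp add: lessThan_Suc_atMost)
    qed
    have "(\<Sum>m. r^m * v m x) \<le> B" using sS SN by (intro suminf_le_const) auto
    then have "(\<Sum>m. r^m * v m x) powr q \<le> B powr q"
      using q r v0 by (intro powr_mono2 suminf_nonneg sS) auto
    also have "\<dots> = K * T" unfolding B_def using q K0 T0 by (simp add: powr_powr powr_one)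
    finally show ?case using sS VT by simp
  qed
  have intV: "integrable lborel (\<lambda>x. K * enn2real (V x))"
  proof (rule integrableI_nonneg)
    show "AE x in lborel. 0 \<le> K * enn2real (V x)" using K0 by auto
    have "(\<integral>\<^sup>+x. ennreal (K * enn2real (V x)) \<partial>lborel) = ennreal K * (\<integral>\<^sup>+x. ennreal (enn2real (V x)) \<partial>lborel)"
      using K0 by (subst nn_integral_cmult[symmetric]) (auto simp: ennreal_mult)
    also have "\<dots> \<le> ennreal K * ennreal (I/(1-r))"
      using nnV by (intro mult_left_mono order_trans[OF nn_integral_mono[OF ennreal_enn2real_le']]) auto
    also have "\<dots> < \<infinity>" by (simp add: ennreal_mult_less_top)
    finally show "(\<integral>\<^sup>+x. ennreal (K * enn2real (V x)) \<partial>lborel) < \<infinity>" .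
  qed measurable
  have intV_le: "(\<integral>x. K * enn2real (V x) \<partial>lborel) \<le> K * (I/(1-r))"
  proof -
    have "(\<integral>x. enn2real (V x) \<partial>lborel) = enn2real (\<integral>\<^sup>+x. ennreal (enn2real (V x)) \<partial>lborel)"
      by (intro integral_eq_nn_integral) auto
    also have "\<dots> \<le> I/(1-r)"
      using nnV I0 r by (intro enn2real_leI order_trans[OF nn_integral_mono[OF ennreal_enn2real_le']]) auto
    finally have "(\<integral>x. enn2real (V x) \<partial>lborel) \<le> I/(1-r)" .
    then show ?thesis using K0 by (simp add: mult_left_mono del: times_divide_eq_right)
  qed
  have intH: "integrable lborel (\<lambda>x. (\<Sum>m. r^m * v m x) powr q)"
  proof (rule Bochner_Integration.integrable_bound[OF intV])
    show "(\<lambda>x. (\<Sum>m. r^m * v m x) powr q) \<in> borel_measurable lborel" by measurable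
    show "AE x in lborel. norm ((\<Sum>m. r^m * v m x) powr q) \<le> norm (K * enn2real (V x))"
      using AE1 K0 by (auto elim!: eventually_mono)
  qed
  have "(\<integral>x. (\<Sum>m. r^m * v m x) powr q \<partial>lborel) \<le> (\<integral>x. K * enn2real (V x) \<partial>lborel)"
    using intH intV AE1 by (intro integral_mono_AE) (auto elim!: eventually_mono)
  with intV_le AE1 intH show ?thesis unfolding K_def by (auto elim!: eventually_mono)
qed

lemma pow_powr: fixes x q :: real assumes "0 \<le> x" shows "(x^n) powr q = (x powr q)^n"
  using assms by (induction n) (auto simp: powr_mult)

lemma memLp_fin: "p \<noteq> top \<Longrightarrow> memLp p f \<longleftrightarrow> f \<in> borel_measurable lborel \<and> integrable lborel (\<lambda>x. \<bar>f x\<bar> powr enn2real p)"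
  by (simp add: memLp_def)

lemma Lpnorm_fin: "p \<noteq> top \<Longrightarrow> Lpnorm p f = (\<integral>x. \<bar>f x\<bar> powr enn2real p \<partial>lborel) powr (1 / enn2real p)"
  by (simp add: Lpnorm_def)

lemma series_eq:
  fixes c \<beta> x :: real and G :: "real \<Rightarrow> real"
  assumes "summable (\<lambda>n. c^n * G (\<beta>^n * x))"
  shows "(\<Sum>n. c^n * G (\<beta>^n * x)) - c * (\<Sum>n. c^n * G (\<beta>^n * (\<beta> * x))) = G x"
proof -
  let ?f = "\<lambda>n. c^n * G (\<beta>^n * x)" and ?h = "\<lambda>n. c^n * G (\<beta>^n * (\<beta> * x))"
  have fs: "?f (Suc n) = c * ?h n" for n by (simp add: mult.assoc mult.left_commute)
  have "(\<Sum>n. ?f (Suc n)) = suminf ?f - ?f 0" using assms by (rule suminf_split_head)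
  moreover have "(\<Sum>n. ?f (Suc n)) = c * suminf ?h"
  proof (cases "c = 0")
    case True then show ?thesis by simp
  next
    case False
    have "summable (\<lambda>n. ?f (Suc n))" using assms by (subst summable_Suc_iff)
    then have "summable (\<lambda>n. c * ?h n)" unfolding fs .
    then have "summable ?h" using False by (simp add: summable_cmult_iff)
    then show ?thesis unfolding fs by (rule suminf_mult)
  qed
  ultimately show ?thesis by simp
qed

lemma finite_case:
  fixes p :: ennreal and c \<beta> :: real and G :: "real \<Rightarrow> real"
  assumes p: "1 \<le> p" "p \<noteq> top" and \<beta>: "\<beta> \<noteq> 0"
    and c: "\<bar>c\<bar> < \<bar>\<beta>\<bar> powr (1 / enn2real p)"
    and G: "memLp p G"
  shows "memLp p (\<lambda>x. \<Sum>n. c^n * G (\<beta>^n * x)) \<and>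
    Lp_series_conv p (\<lambda>n x. c^n * G (\<beta>^n * x)) (\<lambda>x. \<Sum>n. c^n * G (\<beta>^n * x)) \<and>
    (AE x in lborel. summable (\<lambda>n. c^n * G (\<beta>^n * x)))"
proof -
  define q where "q = enn2real p"
  have q1: "1 \<le> q" unfolding q_def using p enn2real_mono[of 1 p] by (auto simp: less_top)
  have Gm[measurable]: "G \<in> borel_measurable lborel" and Gi: "integrable lborel (\<lambda>x. \<bar>G x\<bar> powr q)"
    using G p by (auto simp: memLp_fin q_def)
  define s where "s n x = c^n * G (\<beta>^n * x)" for n x
  define F where "F x = (\<Sum>n. s n x)" for x
  define I where "I = (\<integral>x. \<bar>G x\<bar> powr q \<partial>lborel)"
  define R where "R = \<bar>\<beta>\<bar> powr (1/q)"
  have R0: "0 < R" using \<beta> by (simp add: R_def)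
  have Rq: "R powr q = \<bar>\<beta>\<bar>" unfolding R_def using q1 by (simp add: powr_powr)
  define r where "r = \<bar>c\<bar> / R"
  have r: "0 \<le> r" "r < 1" using c R0 by (auto simp: r_def R_def q_def)
  define u where "u n x = R^n * \<bar>G (\<beta>^n * x)\<bar>" for n x
  have sm[measurable]: "s n \<in> borel_measurable lborel" for n unfolding s_def by measurable
  have um[measurable]: "u n \<in> borel_measurable lborel" for n unfolding u_def by measurable
  have Fm[measurable]: "F \<in> borel_measurable lborel" unfolding F_def by measurable
  have u0: "0 \<le> u n x" for n x using R0 by (simp add: u_def)
  have su: "\<bar>s n x\<bar> = r^n * u n x" for n x
    using R0 by (simp add: s_def u_def r_def abs_mult power_abs power_divide)
  have upow: "u n x powr q = \<bar>\<beta>\<bar>^n * \<bar>G (\<beta>^n * x)\<bar> powr q" for n x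
    unfolding u_def using R0 by (simp add: powr_mult pow_powr Rq)
  have \<beta>n: "\<beta>^n \<noteq> 0" for n using \<beta> by simp
  have ui: "integrable lborel (\<lambda>x. u n x powr q)" for n
    unfolding upow using integrable_scale[OF \<beta>n Gi] by simp
  have uI: "(\<integral>x. u n x powr q \<partial>lborel) = I" for n
    unfolding upow using integral_scale[OF \<beta>n, of "\<lambda>x. \<bar>G x\<bar> powr q"] \<beta>
    by (simp add: I_def power_abs)
  define C where "C = (2/(1-r)) powr (q-1) * (I/(1-r))"
  have tail: "integrable lborel (\<lambda>x. \<bar>F x - (\<Sum>n<N. s n x)\<bar> powr q) \<and>
     (\<integral>x. \<bar>F x - (\<Sum>n<N. s n x)\<bar> powr q \<partial>lborel) \<le> (r^N) powr q * C \<and>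
     (AE x in lborel. summable (\<lambda>n. s n x))" for N
  proof -
    have L: "(AE x in lborel. summable (\<lambda>m. r^m * u (m+N) x)) \<and>
      integrable lborel (\<lambda>x. (\<Sum>m. r^m * u (m+N) x) powr q) \<and>
      (\<integral>x. (\<Sum>m. r^m * u (m+N) x) powr q \<partial>lborel) \<le> C"
      unfolding C_def using q1 r u0 ui uI by (intro series_Lq) auto
    have AE2: "AE x in lborel. summable (\<lambda>n. s n x) \<and>
       \<bar>F x - (\<Sum>n<N. s n x)\<bar> powr q \<le> (r^N) powr q * (\<Sum>m. r^m * u (m+N) x) powr q"
      using L[THEN conjunct1]
    proof eventually_elim
      case (elim x)
      have abs_eq: "\<bar>s (m+N) x\<bar> = r^N * (r^m * u (m+N) x)" for m
        by (simp add: su power_add)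
      have sa: "summable (\<lambda>m. \<bar>s (m+N) x\<bar>)" unfolding abs_eq using elim by (rule summable_mult)
      then have ss: "summable (\<lambda>m. s (m+N) x)" by (rule summable_rabs_cancel)
      then have sfull: "summable (\<lambda>n. s n x)" using summable_iff_shift[of "\<lambda>n. s n x" N] by simp
      have "F x - (\<Sum>n<N. s n x) = (\<Sum>m. s (m+N) x)"
        unfolding F_def using suminf_split_initial_segment[OF sfull, of N] by simp
      then have "\<bar>F x - (\<Sum>n<N. s n x)\<bar> \<le> (\<Sum>m. \<bar>s (m+N) x\<bar>)"
        using summable_rabs[OF sa] by simp
      also have "\<dots> = r^N * (\<Sum>m. r^m * u (m+N) x)"
        unfolding abs_eq using elim by (rule suminf_mult)
      finally have "\<bar>F x - (\<Sum>n<N. s n x)\<bar> powr q \<le> (r^N * (\<Sum>m. r^m * u (m+N) x)) powr q"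
        using q1 by (intro powr_mono2) auto
      then show ?case using sfull by (simp add: powr_mult)
    qed
    have intB: "integrable lborel (\<lambda>x. (r^N) powr q * (\<Sum>m. r^m * u (m+N) x) powr q)"
      using L by auto
    have intT: "integrable lborel (\<lambda>x. \<bar>F x - (\<Sum>n<N. s n x)\<bar> powr q)"
    proof (rule Bochner_Integration.integrable_bound[OF intB])
      show "(\<lambda>x. \<bar>F x - (\<Sum>n<N. s n x)\<bar> powr q) \<in> borel_measurable lborel" by measurable
      show "AE x in lborel. norm (\<bar>F x - (\<Sum>n<N. s n x)\<bar> powr q) \<le> norm ((r^N) powr q * (\<Sum>m. r^m * u (m+N) x) powr q)"
        using AE2 by (auto elim!: eventually_mono)
    qed
    have "(\<integral>x. \<bar>F x - (\<Sum>n<N. s n x)\<bar> powr q \<partial>lborel) \<le> (\<integral>x. (r^N) powr q * (\<Sum>m. r^m * u (m+N) x) powr q \<partial>lborel)"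
      using intT intB AE2 by (intro integral_mono_AE) (auto elim!: eventually_mono)
    also have "\<dots> = (r^N) powr q * (\<integral>x. (\<Sum>m. r^m * u (m+N) x) powr q \<partial>lborel)" by simp
    also have "\<dots> \<le> (r^N) powr q * C" using L by (intro mult_left_mono) auto
    finally show ?thesis using intT AE2 by (auto elim!: eventually_mono)
  qed
  have C0: "0 \<le> C" unfolding C_def I_def using r by (intro mult_nonneg_nonneg divide_nonneg_nonneg integral_nonneg_AE) auto
  have memF: "memLp p F"
    using tail[of 0] p by (simp add: memLp_fin q_def[symmetric])
  have mems: "memLp p (s n)" for n
  proof -
    have "integrable lborel (\<lambda>x. (r^n) powr q * u n x powr q)" using ui by simp
    then show ?thesis using p by (simp add: memLp_fin q_def[symmetric] su powr_mult)
  qed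
  have norms: "Lpnorm p (s n) = r^n * I powr (1/q)" for n
  proof -
    have "(\<integral>x. \<bar>s n x\<bar> powr q \<partial>lborel) = (r^n) powr q * I"
      by (simp add: su powr_mult uI)
    then show ?thesis using p q1 r by (simp add: Lpnorm_fin q_def[symmetric] powr_mult powr_powr)
  qed
  have summ: "summable (\<lambda>n. Lpnorm p (s n))"
    unfolding norms using r by (intro summable_mult2 summable_geometric) auto
  have conv: "(\<lambda>N. Lpnorm p (\<lambda>x. F x - (\<Sum>n<N. s n x))) \<longlonglongrightarrow> 0"
  proof (rule tendsto_sandwich[of "\<lambda>_. 0" _ _ "\<lambda>N. r^N * C powr (1/q)"])
    show "\<forall>\<^sub>F N in sequentially. 0 \<le> Lpnorm p (\<lambda>x. F x - (\<Sum>n<N. s n x))"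
      using p by (simp add: Lpnorm_fin)
    show "\<forall>\<^sub>F N in sequentially. Lpnorm p (\<lambda>x. F x - (\<Sum>n<N. s n x)) \<le> r^N * C powr (1/q)"
    proof (intro always_eventually allI)
      fix N
      have "Lpnorm p (\<lambda>x. F x - (\<Sum>n<N. s n x)) \<le> ((r^N) powr q * C) powr (1/q)"
        using p q1 tail[of N] by (simp add: Lpnorm_fin q_def[symmetric] powr_mono2 integral_nonneg_AE)
      also have "\<dots> = r^N * C powr (1/q)" using q1 r by (simp add: powr_mult powr_powr)
      finally show "Lpnorm p (\<lambda>x. F x - (\<Sum>n<N. s n x)) \<le> r^N * C powr (1/q)" .
    qed
    show "(\<lambda>N. r^N * C powr (1/q)) \<longlonglongrightarrow> 0" using r
      by (intro tendsto_mult_left_zero LIMSEQ_power_zero) auto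
  qed simp
  show ?thesis using memF mems summ conv tail[of 0]
    unfolding Lp_series_conv_def F_def s_def by auto
qed

lemma lborel_not_AE_False: "\<not> (AE x in (lborel::real measure). False)"
proof
  assume "AE x in (lborel::real measure). False"
  then have "ae_filter (lborel::real measure) = bot" using trivial_limit_def by blast
  then show False by (simp add: ae_filter_eq_bot_iff)
qed

lemma esssup_nonneg: "0 \<le> esssup lborel (\<lambda>x::real. ereal \<bar>f x\<bar>)"
proof (rule ccontr)
  assume "\<not> 0 \<le> esssup lborel (\<lambda>x::real. ereal \<bar>f x\<bar>)"
  then have lt: "esssup lborel (\<lambda>x::real. ereal \<bar>f x\<bar>) < 0" by simp
  have "AE x in lborel. ereal \<bar>f x\<bar> \<le> esssup lborel (\<lambda>x::real. ereal \<bar>f x\<bar>)" by (rule esssup_AE)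
  then have "AE x in (lborel::real measure). False"
  proof eventually_elim
    case (elim x) then show ?case using lt by (metis abs_ge_zero ereal_less_eq(5) linorder_not_le order_less_le_trans)
  qed
  then show False using lborel_not_AE_False by blast
qed

lemma Lpnorm_top_nonneg: "0 \<le> Lpnorm top f"
  unfolding Lpnorm_def using esssup_nonneg[of f] by (simp add: real_of_ereal_pos)

lemma memLp_top_bound:
  assumes "memLp top G" obtains M where "0 \<le> M" "AE x in lborel. \<bar>G x\<bar> \<le> M"
proof -
  define e where "e = esssup lborel (\<lambda>x. ereal \<bar>G x\<bar>)"
  have e: "e < \<infinity>" using assms by (simp add: memLp_def e_def)
  have "AE x in lborel. ereal \<bar>G x\<bar> \<le> e" unfolding e_def by (rule esssup_AE)
  then have "AE x in lborel. \<bar>G x\<bar> \<le> max 0 (real_of_ereal e)"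
  proof eventually_elim
    case (elim x) then show ?case using e by (cases e) auto
  qed
  then show ?thesis by (intro that[of "max 0 (real_of_ereal e)"]) auto
qed

lemma Lpnorm_top_le:
  assumes fm: "f \<in> borel_measurable lborel" and B: "0 \<le> B" and AE: "AE x in lborel. \<bar>f x\<bar> \<le> B"
  shows "memLp top f \<and> Lpnorm top f \<le> B"
proof -
  have "esssup lborel (\<lambda>x. ereal \<bar>f x\<bar>) \<le> ereal B"
    using fm AE by (intro esssup_I) (auto elim!: eventually_mono)
  moreover have "0 \<le> esssup lborel (\<lambda>x. ereal \<bar>f x\<bar>)" by (rule esssup_nonneg)
  ultimately show ?thesis using fm unfolding memLp_def Lpnorm_def
    by (cases "esssup lborel (\<lambda>x. ereal \<bar>f x\<bar>)") auto
qed

lemma inf_case: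
  fixes c \<beta> :: real and G :: "real \<Rightarrow> real"
  assumes \<beta>: "\<beta> \<noteq> 0" and c: "\<bar>c\<bar> < 1" and G: "memLp top G"
  shows "memLp top (\<lambda>x. \<Sum>n. c^n * G (\<beta>^n * x)) \<and>
    Lp_series_conv top (\<lambda>n x. c^n * G (\<beta>^n * x)) (\<lambda>x. \<Sum>n. c^n * G (\<beta>^n * x)) \<and>
    (AE x in lborel. summable (\<lambda>n. c^n * G (\<beta>^n * x)))"
proof -
  have Gm[measurable]: "G \<in> borel_measurable lborel" using G by (simp add: memLp_def)
  obtain M where M: "0 \<le> M" "AE x in lborel. \<bar>G x\<bar> \<le> M" using memLp_top_bound[OF G] by blast
  define s where "s n x = c^n * G (\<beta>^n * x)" for n x
  define F where "F x = (\<Sum>n. s n x)" for x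
  have sm[measurable]: "s n \<in> borel_measurable lborel" for n unfolding s_def by measurable
  have Fm[measurable]: "F \<in> borel_measurable lborel" unfolding F_def by measurable
  have \<beta>n: "\<beta>^n \<noteq> 0" for n using \<beta> by simp
  have AEall: "AE x in lborel. \<forall>n. \<bar>G (\<beta>^n * x)\<bar> \<le> M"
    using M(2) by (intro AE_all_countable[THEN iffD2] allI AE_scale[OF \<beta>n])
  have sb: "AE x in lborel. \<forall>n. \<bar>s n x\<bar> \<le> \<bar>c\<bar>^n * M"
    using AEall by eventually_elim (auto simp: s_def abs_mult power_abs intro: mult_left_mono)
  have gs: "summable (\<lambda>n. \<bar>c\<bar>^n * M)" using c by (intro summable_mult2 summable_geometric) auto
  have tailb: "AE x in lborel. summable (\<lambda>n. s n x) \<and> (\<forall>N. \<bar>F x - (\<Sum>n<N. s n x)\<bar> \<le> \<bar>c\<bar>^N * (M / (1 - \<bar>c\<bar>)))"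
    using sb
  proof eventually_elim
    case (elim x)
    have sa: "summable (\<lambda>n. \<bar>s n x\<bar>)"
      by (rule summable_comparison_test'[OF gs, where N=0]) (use elim in auto)
    then have sfull: "summable (\<lambda>n. s n x)" by (rule summable_rabs_cancel)
    have "\<bar>F x - (\<Sum>n<N. s n x)\<bar> \<le> \<bar>c\<bar>^N * (M / (1 - \<bar>c\<bar>))" for N
    proof -
      have saN: "summable (\<lambda>m. \<bar>s (m+N) x\<bar>)" using sa summable_iff_shift[of "\<lambda>n. \<bar>s n x\<bar>" N] by simp
      have gsN: "summable (\<lambda>m. \<bar>c\<bar>^N * M * \<bar>c\<bar>^m)" using c by (intro summable_mult summable_geometric) auto
      have "F x - (\<Sum>n<N. s n x) = (\<Sum>m. s (m+N) x)"
        unfolding F_def using suminf_split_initial_segment[OF sfull, of N] by simp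
      then have "\<bar>F x - (\<Sum>n<N. s n x)\<bar> \<le> (\<Sum>m. \<bar>s (m+N) x\<bar>)"
        using summable_rabs[OF saN] by simp
      also have "\<dots> \<le> (\<Sum>m. \<bar>c\<bar>^N * M * \<bar>c\<bar>^m)"
      proof (intro suminf_le[OF _ saN gsN])
        fix m show "\<bar>s (m+N) x\<bar> \<le> \<bar>c\<bar>^N * M * \<bar>c\<bar>^m"
          using elim[rule_format, of "m+N"] by (simp add: power_add mult_ac)
      qed
      also have "\<dots> = \<bar>c\<bar>^N * M * (1 / (1 - \<bar>c\<bar>))"
        using c by (subst suminf_mult) (auto simp: suminf_geometric)
      finally show ?thesis by simp
    qed
    then show ?case using sfull by blast
  qed
  have "AE x in lborel. \<bar>F x\<bar> \<le> M / (1 - \<bar>c\<bar>)"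
    using tailb by eventually_elim (use M c in \<open>auto dest: spec[of _ 0]\<close>)
  then have memF: "memLp top F"
    using Lpnorm_top_le[OF Fm, of "M / (1 - \<bar>c\<bar>)"] M c by auto
  have mems: "memLp top (s n) \<and> Lpnorm top (s n) \<le> \<bar>c\<bar>^n * M" for n
    using sb M by (intro Lpnorm_top_le) (auto elim!: eventually_mono)
  have summ: "summable (\<lambda>n. Lpnorm top (s n))"
    using gs by (rule summable_comparison_test') (use mems Lpnorm_top_nonneg in auto)
  have conv: "(\<lambda>N. Lpnorm top (\<lambda>x. F x - (\<Sum>n<N. s n x))) \<longlonglongrightarrow> 0"
  proof (rule tendsto_sandwich[of "\<lambda>_. 0" _ _ "\<lambda>N. \<bar>c\<bar>^N * (M / (1 - \<bar>c\<bar>))"])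
    show "\<forall>\<^sub>F N in sequentially. 0 \<le> Lpnorm top (\<lambda>x. F x - (\<Sum>n<N. s n x))"
      by (simp add: Lpnorm_top_nonneg)
    show "\<forall>\<^sub>F N in sequentially. Lpnorm top (\<lambda>x. F x - (\<Sum>n<N. s n x)) \<le> \<bar>c\<bar>^N * (M / (1 - \<bar>c\<bar>))"
    proof (intro always_eventually allI)
      fix N
      have "AE x in lborel. \<bar>F x - (\<Sum>n<N. s n x)\<bar> \<le> \<bar>c\<bar>^N * (M / (1 - \<bar>c\<bar>))"
        using tailb by eventually_elim auto
      then show "Lpnorm top (\<lambda>x. F x - (\<Sum>n<N. s n x)) \<le> \<bar>c\<bar>^N * (M / (1 - \<bar>c\<bar>))"
        using Lpnorm_top_le[of "\<lambda>x. F x - (\<Sum>n<N. s n x)" "\<bar>c\<bar>^N * (M / (1 - \<bar>c\<bar>))"] M c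
        by auto
    qed
    show "(\<lambda>N. \<bar>c\<bar>^N * (M / (1 - \<bar>c\<bar>))) \<longlonglongrightarrow> 0" using c
      by (intro tendsto_mult_left_zero LIMSEQ_power_zero) auto
  qed simp
  show ?thesis using memF mems summ conv tailb
    unfolding Lp_series_conv_def F_def s_def by (auto elim!: eventually_mono)
qed

lemma iter_zero:
  fixes d :: "real \<Rightarrow> real"
  assumes \<gamma>: "\<gamma> \<noteq> 0" and \<theta>: "0 \<le> \<theta>" "\<theta> < 1"
    and H: "AE x in lborel. \<bar>d x\<bar> \<le> \<theta> * \<bar>d (\<gamma> * x)\<bar>" and B: "AE x in lborel. \<bar>d x\<bar> \<le> B"
  shows "AE x in lborel. d x = 0"
proof -
  have k: "AE x in lborel. \<bar>d x\<bar> \<le> \<theta>^k * B" for k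
  proof (induction k)
    case 0 then show ?case using B by simp
  next
    case (Suc k)
    have "AE x in lborel. \<bar>d (\<gamma> * x)\<bar> \<le> \<theta>^k * B" using Suc by (rule AE_scale[OF \<gamma>])
    with H show ?case
    proof eventually_elim
      case (elim x)
      have "\<theta> * \<bar>d (\<gamma> * x)\<bar> \<le> \<theta> * (\<theta>^k * B)" using elim \<theta> by (intro mult_left_mono) auto
      then show ?case using elim by simp
    qed
  qed
  then have "AE x in lborel. \<forall>k. \<bar>d x\<bar> \<le> \<theta>^k * B" by (simp add: AE_all_countable)
  then show ?thesis
  proof eventually_elim
    case (elim x)
    have "(\<lambda>k. \<theta>^k * B) \<longlonglongrightarrow> 0" using \<theta> by (intro tendsto_mult_left_zero LIMSEQ_power_zero) auto
    then have "\<bar>d x\<bar> \<le> 0" by (rule LIMSEQ_le_const) (use elim in auto)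
    then show ?case by simp
  qed
qed

lemma root_p_pos: "b \<noteq> 0 \<Longrightarrow> 0 < root_p p b"
  by (simp add: root_p_def)

lemma uniq:
  fixes p :: ennreal and a b :: real and g h f :: "real \<Rightarrow> real"
  assumes p: "1 \<le> p" and b: "b \<noteq> 0" and a: "\<bar>a\<bar> \<noteq> root_p p b"
    and h: "memLp p h" and f: "memLp p f"
    and he: "AE x in lborel. h x - a * h (b * x) = g x"
    and fe: "AE x in lborel. f x - a * f (b * x) = g x"
  shows "AE x in lborel. h x = f x"
proof -
  define d where "d x = h x - f x" for x
  have hm[measurable]: "h \<in> borel_measurable lborel" and fm[measurable]: "f \<in> borel_measurable lborel"
    using h f by (auto simp: memLp_def)
  have dm[measurable]: "d \<in> borel_measurable lborel" unfolding d_def by measurable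
  have de: "AE x in lborel. d x = a * d (b * x)"
    using he fe by eventually_elim (simp add: d_def algebra_simps)
  have "AE x in lborel. d x = 0"
  proof (cases "p = top")
    case True
    then have a1: "\<bar>a\<bar> \<noteq> 1" using a by (simp add: root_p_def)
    obtain Mh where Mh: "AE x in lborel. \<bar>h x\<bar> \<le> Mh" using memLp_top_bound h True by metis
    obtain Mf where Mf: "AE x in lborel. \<bar>f x\<bar> \<le> Mf" using memLp_top_bound f True by metis
    have B: "AE x in lborel. \<bar>d x\<bar> \<le> Mh + Mf" using Mh Mf by eventually_elim (auto simp: d_def)
    show ?thesis
    proof (cases "\<bar>a\<bar> < 1")
      case True
      have "AE x in lborel. \<bar>d x\<bar> \<le> \<bar>a\<bar> * \<bar>d (b * x)\<bar>" using de by eventually_elim (simp add: abs_mult)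
      then show ?thesis using True b B by (intro iter_zero[where \<gamma>=b and \<theta>="\<bar>a\<bar>" and B="Mh+Mf"]) auto
    next
      case False
      then have a1': "1 < \<bar>a\<bar>" using a1 by simp
      have b': "1/b \<noteq> 0" using b by simp
      have "AE x in lborel. d ((1/b) * x) = a * d (b * ((1/b) * x))" using de by (rule AE_scale[OF b'])
      then have "AE x in lborel. \<bar>d x\<bar> \<le> (1/\<bar>a\<bar>) * \<bar>d ((1/b) * x)\<bar>"
      proof eventually_elim
        case (elim x)
        then have "d ((1/b) * x) = a * d x" using b by simp
        then show ?case using a1' by (simp add: abs_mult field_simps)
      qed
      then show ?thesis using a1' b' B by (intro iter_zero[where \<gamma>="1/b" and \<theta>="1/\<bar>a\<bar>" and B="Mh+Mf"]) auto
    qed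
  next
    case False
    define q where "q = enn2real p"
    have q1: "1 \<le> q" unfolding q_def using p False enn2real_mono[of 1 p] by (auto simp: less_top)
    have hi: "integrable lborel (\<lambda>x. \<bar>h x\<bar> powr q)" and fi: "integrable lborel (\<lambda>x. \<bar>f x\<bar> powr q)"
      using h f False by (auto simp: memLp_fin q_def)
    have di: "integrable lborel (\<lambda>x. \<bar>d x\<bar> powr q)"
    proof (rule Bochner_Integration.integrable_bound)
      show "integrable lborel (\<lambda>x. 2 powr q * (\<bar>h x\<bar> powr q + \<bar>f x\<bar> powr q))"
        using hi fi by auto
      show "(\<lambda>x. \<bar>d x\<bar> powr q) \<in> borel_measurable lborel" by measurable
      show "AE x in lborel. norm (\<bar>d x\<bar> powr q) \<le> norm (2 powr q * (\<bar>h x\<bar> powr q + \<bar>f x\<bar> powr q))"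
      proof (intro AE_I2)
        fix x
        have "\<bar>d x\<bar> powr q \<le> (2 * max \<bar>h x\<bar> \<bar>f x\<bar>) powr q"
          using q1 by (intro powr_mono2) (auto simp: d_def)
        also have "\<dots> = 2 powr q * max \<bar>h x\<bar> \<bar>f x\<bar> powr q" by (simp add: powr_mult)
        also have "\<dots> \<le> 2 powr q * (\<bar>h x\<bar> powr q + \<bar>f x\<bar> powr q)"
          by (intro mult_left_mono) (auto simp: max_def)
        finally show "norm (\<bar>d x\<bar> powr q) \<le> norm (2 powr q * (\<bar>h x\<bar> powr q + \<bar>f x\<bar> powr q))" by simp
      qed
    qed
    define J where "J = (\<integral>x. \<bar>d x\<bar> powr q \<partial>lborel)"
    have "J = (\<integral>x. \<bar>a\<bar> powr q * \<bar>d (b * x)\<bar> powr q \<partial>lborel)"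
      unfolding J_def using de by (intro integral_cong_AE) (auto elim!: eventually_mono simp: abs_mult powr_mult)
    also have "\<dots> = \<bar>a\<bar> powr q * (J / \<bar>b\<bar>)"
      using integral_scale[OF b, of "\<lambda>x. \<bar>d x\<bar> powr q"] by (simp add: J_def)
    finally have JJ: "J * (\<bar>b\<bar> - \<bar>a\<bar> powr q) = 0" using b by (simp add: field_simps)
    have "\<bar>a\<bar> powr q \<noteq> \<bar>b\<bar>"
    proof
      assume "\<bar>a\<bar> powr q = \<bar>b\<bar>"
      then have "\<bar>a\<bar> = \<bar>b\<bar> powr (1/q)" using q1 by (metis abs_ge_zero powr_one powr_powr mult.commute divide_self_if
          times_divide_eq_right mult_1 not_one_le_zero)
      then show False using a False by (simp add: root_p_def q_def)
    qed
    then have "J = 0" using JJ by simp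
    then have "AE x in lborel. \<bar>d x\<bar> powr q = 0"
      using integral_nonneg_eq_0_iff_AE[OF di] by (simp add: J_def)
    then show ?thesis by eventually_elim simp
  qed
  then show ?thesis by eventually_elim (simp add: d_def)
qed

lemma small_case:
  fixes p :: ennreal and c \<beta> :: real and G :: "real \<Rightarrow> real"
  assumes p: "1 \<le> p" and \<beta>: "\<beta> \<noteq> 0" and c: "\<bar>c\<bar> < root_p p \<beta>" and G: "memLp p G"
  shows "memLp p (\<lambda>x. \<Sum>n. c^n * G (\<beta>^n * x)) \<and>
    Lp_series_conv p (\<lambda>n x. c^n * G (\<beta>^n * x)) (\<lambda>x. \<Sum>n. c^n * G (\<beta>^n * x)) \<and>
    (AE x in lborel. (\<Sum>n. c^n * G (\<beta>^n * x)) - c * (\<Sum>n. c^n * G (\<beta>^n * (\<beta> * x))) = G x)"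
proof -
  have "memLp p (\<lambda>x. \<Sum>n. c^n * G (\<beta>^n * x)) \<and>
    Lp_series_conv p (\<lambda>n x. c^n * G (\<beta>^n * x)) (\<lambda>x. \<Sum>n. c^n * G (\<beta>^n * x)) \<and>
    (AE x in lborel. summable (\<lambda>n. c^n * G (\<beta>^n * x)))"
  proof (cases "p = top")
    case True then show ?thesis using inf_case[OF \<beta> _ ] c G by (simp add: root_p_def)
  next
    case False then show ?thesis using finite_case[OF p False \<beta> _ G] c by (simp add: root_p_def)
  qed
  then show ?thesis using series_eq by (auto elim!: eventually_mono)
qed

theorem corollary3p3:
  fixes p :: ennreal and a b :: real and g :: "real \<Rightarrow> real"
  assumes "1 \<le> p"
    and "b \<noteq> 0"
    and "\<bar>a\<bar> \<noteq> root_p p b"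
    and "memLp p g"
  shows "\<exists>f. memLp p f \<and> (AE x in lborel. f x - a * f (b * x) = g x) \<and>
    (\<forall>h. memLp p h \<and> (AE x in lborel. h x - a * h (b * x) = g x)
          \<longrightarrow> (AE x in lborel. h x = f x)) \<and>
    (\<bar>a\<bar> < root_p p b \<longrightarrow>
       Lp_series_conv p (\<lambda>n x. a ^ n * g (b ^ n * x)) f) \<and>
    (\<bar>a\<bar> > root_p p b \<longrightarrow>
       Lp_series_conv p (\<lambda>n x. - ((1 / a) ^ (n + 1) * g (x / b ^ (n + 1)))) f)"
proof -
  note p = assms(1) and b = assms(2) and a = assms(3) and g = assms(4)
  have gm[measurable]: "g \<in> borel_measurable lborel" using g by (simp add: memLp_def)
  have R0: "0 < root_p p b" using b by (rule root_p_pos)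
  show ?thesis
  proof (cases "\<bar>a\<bar> < root_p p b")
    case True
    define f where "f x = (\<Sum>n. a^n * g (b^n * x))" for x
    have S: "memLp p f \<and> Lp_series_conv p (\<lambda>n x. a^n * g (b^n * x)) f \<and>
      (AE x in lborel. f x - a * f (b * x) = g x)"
      using small_case[OF p b True g] unfolding f_def by simp
    show ?thesis
    proof (intro exI[of _ f] conjI allI impI)
      fix h assume "memLp p h \<and> (AE x in lborel. h x - a * h (b * x) = g x)"
      then show "AE x in lborel. h x = f x" using uniq[OF p b a] S by blast
    qed (use S True in auto)
  next
    case False
    then have gt: "root_p p b < \<bar>a\<bar>" using a by simp
    then have a0: "a \<noteq> 0" using R0 by auto
    have b': "1/b \<noteq> 0" using b by simp
    define G where "G x = -(1/a) * g ((1/b) * x)" for x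
    have Gm[measurable]: "G \<in> borel_measurable lborel" unfolding G_def by measurable
    have memG: "memLp p G"
    proof (cases "p = top")
      case True
      obtain M where M: "0 \<le> M" "AE x in lborel. \<bar>g x\<bar> \<le> M" using memLp_top_bound g True by metis
      have "AE x in lborel. \<bar>g ((1/b) * x)\<bar> \<le> M" using M(2) by (rule AE_scale[OF b'])
      then have "AE x in lborel. \<bar>G x\<bar> \<le> \<bar>1/a\<bar> * M"
        by eventually_elim (auto simp: G_def abs_mult intro: mult_left_mono divide_right_mono)
      then show ?thesis using Lpnorm_top_le[OF Gm, of "\<bar>1/a\<bar> * M"] M True by auto
    next
      case False
      have gi: "integrable lborel (\<lambda>x. \<bar>g x\<bar> powr enn2real p)" using g False by (simp add: memLp_fin)
      have "integrable lborel (\<lambda>x. \<bar>1/a\<bar> powr enn2real p * \<bar>g ((1/b) * x)\<bar> powr enn2real p)"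
        using integrable_scale[OF b' gi] by simp
      then show ?thesis using False a0 by (simp add: memLp_fin G_def abs_mult powr_divide)
    qed
    have c': "\<bar>1/a\<bar> < root_p p (1/b)"
    proof (cases "p = top")
      case True then show ?thesis using gt by (simp add: root_p_def)
    next
      case False
      have "root_p p (1/b) = 1 / root_p p b" using False b by (simp add: root_p_def powr_divide)
      then show ?thesis using gt R0 by (simp add: frac_less2)
    qed
    define f where "f x = (\<Sum>n. (1/a)^n * G ((1/b)^n * x))" for x
    have S: "memLp p f \<and> Lp_series_conv p (\<lambda>n x. (1/a)^n * G ((1/b)^n * x)) f \<and>
      (AE x in lborel. f x - (1/a) * f ((1/b) * x) = G x)"
      using small_case[OF p b' c' memG] unfolding f_def by simp
    have seq: "(\<lambda>n x. (1/a)^n * G ((1/b)^n * x)) = (\<lambda>n x. - ((1 / a) ^ (n + 1) * g (x / b ^ (n + 1))))"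
      by (intro ext) (simp add: G_def power_one_over field_simps)
    have "AE x in lborel. f (b * x) - (1/a) * f ((1/b) * (b * x)) = G (b * x)"
      using S by (intro AE_scale[OF b]) auto
    then have eq: "AE x in lborel. f x - a * f (b * x) = g x"
    proof eventually_elim
      case (elim x)
      then have "f (b * x) - (1/a) * f x = -(1/a) * g x" using b by (simp add: G_def)
      then have "a * (f (b * x) - (1/a) * f x) = a * (-(1/a) * g x)" by simp
      then have "a * f (b * x) - f x = - g x" using a0 by (simp add: right_diff_distrib)
      then show ?case by linarith
    qed
    show ?thesis
    proof (intro exI[of _ f] conjI allI impI)
      fix h assume "memLp p h \<and> (AE x in lborel. h x - a * h (b * x) = g x)"
      then show "AE x in lborel. h x = f x" using uniq[OF p b a] S eq by blast
    qed (use S False seq eq in auto)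
  qed
qed

end
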